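(* Let $1\le N_a<N_b$, $\mathcal N=N_a+N_b$, real $\kappa_1<\dots<\kappa_{\mathcal N}$ with indices taken modulo $\mathcal N$. For $q=(q_1,q_2)\in\mathbb R^2$ define $q_{mn}=q_2-(\kappa_m+\kappa_n)q_1+\kappa_m\kappa_n$ and $\widetilde q_{mn}=(\kappa_m-\kappa_n)q_{mn}$, and let $\theta$ be the Heaviside step function. Then for every $m$ the characteristic function $\epsilon_m(q)=\prod_{k=m}^{m+N_b}\theta(\widetilde q_{k+N_a,k})$ coincides with $$\widetilde\epsilon_m(q)=\prod_{k=m}^{m+N_b}\theta(\widetilde q_{k+N_a,k})\prod_{l=m}^{m+N_b-1}\theta(\widetilde q_{l+N_a,l+1}).$$
   Context: Indices of $\kappa$ are read modulo $\mathcal N$, i.e. $\kappa_{l+\mathcal N}=\kappa_l$. *)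

theory Defs
  imports Complex_Main
begin

definition heaviside :: "real \<Rightarrow> real" where
  "heaviside x = (if x \<ge> 0 then 1 else 0)"

definition qmn :: "(int \<Rightarrow> real) \<Rightarrow> real \<times> real \<Rightarrow> int \<Rightarrow> int \<Rightarrow> real" where
  "qmn \<kappa> q m n = snd q - (\<kappa> m + \<kappa> n) * fst q + \<kappa> m * \<kappa> n"

definition qtilde :: "(int \<Rightarrow> real) \<Rightarrow> real \<times> real \<Rightarrow> int \<Rightarrow> int \<Rightarrow> real" where
  "qtilde \<kappa> q m n = (\<kappa> m - \<kappa> n) * qmn \<kappa> q m n"

definition eps :: "nat \<Rightarrow> nat \<Rightarrow> (int \<Rightarrow> real) \<Rightarrow> int \<Rightarrow> real \<times> real \<Rightarrow> real" where
  "eps Na Nb \<kappa> m q = (\<Prod>k\<in>{m..m + int Nb}. heaviside (qtilde \<kappa> q (k + int Na) k))"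

definition eps_tilde :: "nat \<Rightarrow> nat \<Rightarrow> (int \<Rightarrow> real) \<Rightarrow> int \<Rightarrow> real \<times> real \<Rightarrow> real" where
  "eps_tilde Na Nb \<kappa> m q =
     (\<Prod>k\<in>{m..m + int Nb}. heaviside (qtilde \<kappa> q (k + int Na) k)) *
     (\<Prod>l\<in>{m..m + int Nb - 1}. heaviside (qtilde \<kappa> q (l + int Na) (l + 1)))"

end

theory Submission
  imports Defs
begin

lemma c1: fixes x y z w s :: real
  assumes o: "x<y" "y<z" "z<w" and h1: "(z-x)*(z*x+s) \<ge> 0" and h2: "(w-y)*(w*y+s)\<ge>0"
  shows "(z-y)*(z*y+s) \<ge> 0"
proof -
  have a: "z*x+s \<ge> 0" using h1 o by (simp add: zero_le_mult_iff)
  have b: "w*y+s \<ge> 0" using h2 o by (simp add: zero_le_mult_iff)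
  have "z*y+s \<ge> 0"
  proof (cases "z \<ge> 0")
    case True then have "z*x \<le> z*y" using o by (simp add: mult_left_mono)
    then show ?thesis using a by linarith
  next
    case False then have "(w-z)*y \<le> 0" using o by (simp add: mult_nonneg_nonpos)
    then show ?thesis using b by (simp add: algebra_simps)
  qed
  then show ?thesis using o by simp
qed
lemma c2: fixes x y z w s :: real
  assumes o: "y<z" "z<w" "w<x" and h1: "(z-x)*(z*x+s) \<ge> 0" and h2: "(w-y)*(w*y+s)\<ge>0"
  shows "(z-y)*(z*y+s) \<ge> 0"
proof -
  have a: "z*x+s \<le> 0" using h1 o by (simp add: zero_le_mult_iff)
  have b: "w*y+s \<ge> 0" using h2 o by (simp add: zero_le_mult_iff)
  have "z*y+s \<ge> 0"
  proof (cases "y \<le> 0")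
    case True then have "(z-w)*y \<ge> 0" using o by (simp add: mult_nonpos_nonpos)
    then show ?thesis using b by (simp add: algebra_simps)
  next
    case False
    then have "w*y < x*y" using o by simp
    moreover have "x*y < x*z" using o False by simp
    ultimately show ?thesis using a b by (simp add: algebra_simps)
  qed
  then show ?thesis using o by simp
qed
lemma c3: fixes x y z w s :: real
  assumes o: "z<w" "w<x" "x<y" and h1: "(z-x)*(z*x+s) \<ge> 0" and h2: "(w-y)*(w*y+s)\<ge>0"
  shows "(z-y)*(z*y+s) \<ge> 0"
proof -
  have a: "z*x+s \<le> 0" using h1 o by (simp add: zero_le_mult_iff)
  have b: "w*y+s \<le> 0" using h2 o by (simp add: zero_le_mult_iff)
  have "z*y+s \<le> 0"
  proof (cases "y \<ge> 0")
    case True then have "(z-w)*y \<le> 0" using o by (simp add: mult_nonpos_nonneg)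
    then show ?thesis using b by (simp add: algebra_simps)
  next
    case False
    then have "z < 0" using o by simp
    then have "z*y \<le> z*x" using o by simp
    then show ?thesis using a by linarith
  qed
  then show ?thesis using o by (simp add: mult_nonpos_nonpos)
qed
lemma c4: fixes x y z w s :: real
  assumes o: "w<x" "x<y" "y<z" and h1: "(z-x)*(z*x+s) \<ge> 0" and h2: "(w-y)*(w*y+s)\<ge>0"
  shows "(z-y)*(z*y+s) \<ge> 0"
proof -
  have a: "z*x+s \<ge> 0" using h1 o by (simp add: zero_le_mult_iff)
  have b: "w*y+s \<le> 0" using h2 o by (simp add: zero_le_mult_iff)
  have "z*y+s \<ge> 0"
  proof (cases "z \<ge> 0")
    case True then have "z*x \<le> z*y" using o by (simp add: mult_left_mono)
    then show ?thesis using a by linarith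
  next
    case False
    then have "z*y < z*x" "z*x < y*x" "y*x < y*w" using o by auto
    then show ?thesis using a b by (simp add: algebra_simps)
  qed
  then show ?thesis using o by simp
qed

lemma loc: fixes x y z w s t :: real
  assumes o: "(x<y\<and>y<z\<and>z<w) \<or> (y<z\<and>z<w\<and>w<x) \<or> (z<w\<and>w<x\<and>x<y) \<or> (w<x\<and>x<y\<and>y<z)"
    and h1: "(z-x)*((z-t)*(x-t)+s) \<ge> 0" and h2: "(w-y)*((w-t)*(y-t)+s)\<ge>0"
  shows "(z-y)*((z-t)*(y-t)+s) \<ge> 0"
proof -
  have h1': "((z-t)-(x-t))*((z-t)*(x-t)+s) \<ge> 0" using h1 by simp
  have h2': "((w-t)-(y-t))*((w-t)*(y-t)+s) \<ge> 0" using h2 by simp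
  have "((z-t)-(y-t))*((z-t)*(y-t)+s) \<ge> 0"
    using o c1[OF _ _ _ h1' h2'] c2[OF _ _ _ h1' h2'] c3[OF _ _ _ h1' h2'] c4[OF _ _ _ h1' h2']
    by auto
  then show ?thesis by simp
qed

lemma qtilde_alt: "qtilde \<kappa> q a b = (\<kappa> a - \<kappa> b) * ((\<kappa> a - fst q) * (\<kappa> b - fst q) + (snd q - fst q ^ 2))"
  unfolding qtilde_def qmn_def by (simp add: algebra_simps power2_eq_square)

lemma prod_heav_1: "finite A \<Longrightarrow> (\<forall>k\<in>A. f k \<ge> 0) \<Longrightarrow> (\<Prod>k\<in>A. heaviside (f k)) = 1"
  by (simp add: heaviside_def)

lemma prod_heav_0: "finite A \<Longrightarrow> k \<in> A \<Longrightarrow> f k < 0 \<Longrightarrow> (\<Prod>k\<in>A. heaviside (f k)) = 0"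
  by (rule prod_zero) (use heaviside_def in \<open>auto intro!: bexI[of _ k]\<close>)

theorem lemma5p3:
  fixes Na Nb :: nat and \<kappa> :: "int \<Rightarrow> real"
  assumes "1 \<le> Na" and "Na < Nb"
    and "\<And>i j. 1 \<le> i \<Longrightarrow> i < j \<Longrightarrow> j \<le> int (Na + Nb) \<Longrightarrow> \<kappa> i < \<kappa> j"
    and "\<And>l. \<kappa> (l + int (Na + Nb)) = \<kappa> l"
  shows "\<forall>m q. eps Na Nb \<kappa> m q = eps_tilde Na Nb \<kappa> m q"
proof -
  define N where "N = int (Na + Nb)"
  have mono: "\<And>i j. 1 \<le> i \<Longrightarrow> i < j \<Longrightarrow> j \<le> N \<Longrightarrow> \<kappa> i < \<kappa> j" using assms(3) N_def by auto
  have per1: "\<And>l. \<kappa> (l + N) = \<kappa> l" using assms(4) N_def by auto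
  have pern: "\<kappa> (l + int n * N) = \<kappa> l" for l n
  proof (induction n arbitrary: l)
    case 0 then show ?case by simp
  next
    case (Suc n)
    have "\<kappa> (l + int (Suc n) * N) = \<kappa> ((l + int n * N) + N)" by (simp add: algebra_simps)
    also have "\<dots> = \<kappa> l" using per1 Suc by simp
    finally show ?case .
  qed
  have perc: "\<kappa> (l + c * N) = \<kappa> l" for l c
  proof (cases "c \<ge> 0")
    case True then show ?thesis using pern[of l "nat c"] by simp
  next
    case False
    have "\<kappa> ((l + c * N) + int (nat (-c)) * N) = \<kappa> (l + c*N)" by (rule pern)
    then show ?thesis using False by simp
  qed
  have Na2: "int Na + 1 < N" using assms(1,2) N_def by simp
  have key: "let x = \<kappa> l; y = \<kappa> (l+1); z = \<kappa> (l + int Na); w = \<kappa> (l + int Na + 1) in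
      (x<y\<and>y<z\<and>z<w) \<or> (y<z\<and>z<w\<and>w<x) \<or> (z<w\<and>w<x\<and>x<y) \<or> (w<x\<and>x<y\<and>y<z)"
    if "Na \<ge> 2" for l
  proof -
    define p where "p = (l - 1) mod N + 1"
    define c where "c = (l - 1) div N"
    have Npos: "N > 0" using Na2 by simp
    have p1: "1 \<le> p" "p \<le> N" using Npos proof -
      have "(l-1) mod N < N" "0 \<le> (l-1) mod N" using Npos by simp_all
      then show "1 \<le> p" "p \<le> N" unfolding p_def by simp_all
    qed
    have lp: "l = p + c * N" unfolding p_def c_def by (metis add.commute add.left_commute diff_add_cancel mod_div_mult_eq)
    have sh: "\<kappa> (l + d) = \<kappa> (p + d)" for d
      using perc[of "p+d" c] lp by (simp add: algebra_simps)
    have shN: "\<kappa> (p + d) = \<kappa> (p + d - N)" for d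
      using per1[of "p+d-N"] by simp
    have na: "int Na \<ge> 2" using that by simp
    have e0: "\<kappa> l = \<kappa> p" using sh[of 0] by simp
    have e3: "\<kappa> (l + int Na + 1) = \<kappa> (p + (int Na + 1))" using sh[of "int Na + 1"] by (simp add: add.assoc)
    show ?thesis
    proof (cases "p + int Na + 1 \<le> N")
      case True
      then show ?thesis unfolding Let_def e0 e3 sh
        using mono[of p "p+1"] mono[of "p+1" "p + int Na"] mono[of "p + int Na" "p + int Na + 1"] p1 na
        by (simp add: add.assoc)
    next
      case F1: False
      show ?thesis
      proof (cases "p + int Na = N")
        case True
        have w: "\<kappa> (p + (int Na + 1)) = \<kappa> 1"
        proof -
          have "\<kappa> (p + (int Na + 1)) = \<kappa> (p + (int Na + 1) - N)" by (rule shN)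
          also have "p + (int Na + 1) - N = 1" using True by simp
          finally show ?thesis .
        qed
        have pge: "p \<ge> 2" using True Na2 by simp
        show ?thesis unfolding Let_def e0 e3 sh add.assoc w
          using mono[of 1 p] mono[of p "p+1"] mono[of "p+1" "p + int Na"] p1 na True pge
          by simp
      next
        case F2: False
        show ?thesis
        proof (cases "p = N")
          case True
          have y: "\<kappa> (p + 1) = \<kappa> 1" using shN[of 1] True by simp
          have z: "\<kappa> (p + int Na) = \<kappa> (int Na)" using shN[of "int Na"] True by simp
          have w: "\<kappa> (p + (int Na + 1)) = \<kappa> (int Na + 1)" using shN[of "int Na + 1"] True by simp
          show ?thesis unfolding Let_def e0 e3 sh add.assoc y z w
            using mono[of 1 "int Na"] mono[of "int Na" "int Na + 1"] mono[of "int Na + 1" N] Na2 na True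
            by simp
        next
          case False
          have z: "\<kappa> (p + int Na) = \<kappa> (p + int Na - N)" using shN[of "int Na"] by simp
          have w: "\<kappa> (p + (int Na + 1)) = \<kappa> (p + int Na - N + 1)" using shN[of "int Na + 1"] by (simp add: algebra_simps)
          have b: "p + int Na > N" using F1 F2 by simp
          have pl: "p < N" using False p1 by simp
          show ?thesis unfolding Let_def e0 e3 sh add.assoc z w
            using mono[of "p + int Na - N" "p + int Na - N + 1"] mono[of "p + int Na - N + 1" p]
              mono[of p "p+1"] Na2 na b pl p1
            by simp
        qed
      qed
    qed
  qed
  have step: "qtilde \<kappa> q (l + int Na) (l + 1) \<ge> 0"
    if h1: "qtilde \<kappa> q (l + int Na) l \<ge> 0" and h2: "qtilde \<kappa> q (l + 1 + int Na) (l + 1) \<ge> 0" for l q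
  proof (cases "Na = 1")
    case True then show ?thesis by (simp add: qtilde_def add.commute)
  next
    case False
    then have "Na \<ge> 2" using assms(1) by simp
    from key[OF this, of l] show ?thesis
      using loc[of "\<kappa> l" "\<kappa> (l+1)" "\<kappa> (l + int Na)" "\<kappa> (l + int Na + 1)" "fst q" "snd q - fst q ^ 2"]
        h1 h2 unfolding qtilde_alt Let_def by (simp add: algebra_simps)
  qed
  show ?thesis
  proof (intro allI)
    fix m q
    show "eps Na Nb \<kappa> m q = eps_tilde Na Nb \<kappa> m q"
    proof (cases "\<forall>k\<in>{m..m + int Nb}. qtilde \<kappa> q (k + int Na) k \<ge> 0")
      case True
      have "\<forall>l\<in>{m..m + int Nb - 1}. qtilde \<kappa> q (l + int Na) (l + 1) \<ge> 0"
      proof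
        fix l assume l: "l \<in> {m..m + int Nb - 1}"
        show "qtilde \<kappa> q (l + int Na) (l + 1) \<ge> 0"
          using step[of q l] True l by auto
      qed
      then show ?thesis unfolding eps_def eps_tilde_def by (simp add: prod_heav_1)
    next
      case False
      then obtain k where k: "k \<in> {m..m + int Nb}" "qtilde \<kappa> q (k + int Na) k < 0" by force
      have "(\<Prod>k\<in>{m..m + int Nb}. heaviside (qtilde \<kappa> q (k + int Na) k)) = 0"
        by (rule prod_heav_0[where f="\<lambda>k. qtilde \<kappa> q (k + int Na) k", OF _ k]) simp
      then show ?thesis unfolding eps_def eps_tilde_def by simp
    qed
  qed
qed

end
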